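(* Consider the planar system $$\frac{dC}{dt} = 1 + m_1\frac{CL}{1+L} - m_2\frac{CL}{1+m_3C} - m_4C,\qquad \frac{dL}{dt} = L - m_5 CL,$$ with positive parameters $m_1,\dots,m_5$. Let $$a=-\frac{m_2}{1+m_3/m_5},\quad b=m_1+m_5-m_4-\frac{m_2}{1+m_3/m_5},\quad c=m_5-m_4,\quad \Delta=b^2-4ac,$$ and, assuming $\Delta\ge 0$ (so that the equilibria $E_2=(1/m_5,L_2)$ and $E_3=(1/m_5,L_3)$ exist), let $L_2=\frac{-b-\sqrt{\Delta}}{2a}$ and $L_3=\frac{-b+\sqrt{\Delta}}{2a}$. Then: 1. $L_2\ge 0$ if and only if $m_5\ge m_4$ or $m_2\le (1+m_3/m_5)(m_1+m_5-m_4)$. 2. $L_3\ge 0$ if and only if $m_2\le (1+m_3/m_5)(m_1+m_5-m_4)$ and $m_5\le m_4$.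
   Context: Nondimensional model of CAR-T cells $C$ and lymphoma cells $L$; $E_2,E_3$ are the coexistence equilibria with $C=1/m_5$, and $L_2,L_3$ are the roots of $aL^2+bL+c=0$. *)

theory Defs
  imports Complex_Main
begin

end

theory Submission
  imports Defs
begin

theorem proposition4:
  fixes m1 m2 m3 m4 m5 a b c \<Delta> L2 L3 :: real
  assumes "m1 > 0" "m2 > 0" "m3 > 0" "m4 > 0" "m5 > 0"
    and "a = - m2 / (1 + m3 / m5)"
    and "b = m1 + m5 - m4 - m2 / (1 + m3 / m5)"
    and "c = m5 - m4"
    and "\<Delta> = b^2 - 4 * a * c"
    and "\<Delta> \<ge> 0"
    and "L2 = (- b - sqrt \<Delta>) / (2 * a)"
    and "L3 = (- b + sqrt \<Delta>) / (2 * a)"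
  shows "(L2 \<ge> 0 \<longleftrightarrow> (m5 \<ge> m4 \<or> m2 \<le> (1 + m3 / m5) * (m1 + m5 - m4)))
       \<and> (L3 \<ge> 0 \<longleftrightarrow> (m2 \<le> (1 + m3 / m5) * (m1 + m5 - m4) \<and> m5 \<le> m4))"
proof -
  define k where "k = 1 + m3 / m5"
  have kp: "k > 0" using assms(3,5) unfolding k_def by (simp add: add_pos_pos)
  have ap: "a < 0" using assms(2,6) kp unfolding k_def[symmetric] by simp
  have P: "m2 \<le> k * (m1 + m5 - m4) \<longleftrightarrow> b \<ge> 0"
  proof -
    have "b * k = k * (m1 + m5 - m4) - m2"
      using assms(7) kp unfolding k_def[symmetric] by (simp add: field_simps)
    moreover have "b \<ge> 0 \<longleftrightarrow> b * k \<ge> 0" using kp by (simp add: zero_le_mult_iff)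
    ultimately show ?thesis by linarith
  qed
  define s where "s = sqrt \<Delta>"
  have s0: "s \<ge> 0" and s2: "s^2 = b^2 - 4*a*c" using assms(9,10) by (auto simp: s_def)
  have L2: "L2 = (b + s) / (2 * (-a))" using assms(11) ap by (simp add: s_def divide_simps)
  have L3: "L3 = (b - s) / (2 * (-a))" using assms(12) ap by (simp add: s_def divide_simps)
  have gen: "\<And>x y::real. y > 0 \<Longrightarrow> (0 \<le> x / y) = (0 \<le> x)"
    by (simp add: zero_le_divide_iff)
  have e2: "L2 \<ge> 0 \<longleftrightarrow> b + s \<ge> 0"
  proof -
    have d: "2 * (-a) > 0" using ap by simp
    show ?thesis unfolding L2 using d by (intro gen)
  qed
  have e3: "L3 \<ge> 0 \<longleftrightarrow> b - s \<ge> 0"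
  proof -
    have d: "2 * (-a) > 0" using ap by simp
    show ?thesis unfolding L3 using d by (intro gen)
  qed
  have sq: "\<And>x y::real. 0 \<le> x \<Longrightarrow> 0 \<le> y \<Longrightarrow> (x \<le> y) = (x^2 \<le> y^2)"
    by (meson power2_le_imp_le power_mono)
  have ac1: "(b^2 \<le> s^2) = (c \<ge> 0)"
  proof -
    have "(b^2 \<le> s^2) = (a * c \<le> 0)" using s2 by linarith
    also have "\<dots> = (c \<ge> 0)" using ap by (simp add: mult_le_0_iff)
    finally show ?thesis .
  qed
  have ac2: "(s^2 \<le> b^2) = (c \<le> 0)"
  proof -
    have "(s^2 \<le> b^2) = (a * c \<ge> 0)" using s2 by linarith
    also have "\<dots> = (c \<le> 0)" using ap by (simp add: zero_le_mult_iff)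
    finally show ?thesis .
  qed
  have q2: "b + s \<ge> 0 \<longleftrightarrow> (c \<ge> 0 \<or> b \<ge> 0)"
  proof (cases "b \<ge> 0")
    case True thus ?thesis using s0 by simp
  next
    case False
    have "b + s \<ge> 0 \<longleftrightarrow> (-b) \<le> s" by linarith
    also have "\<dots> \<longleftrightarrow> (-b)^2 \<le> s^2" using False s0 by (intro sq) auto
    also have "\<dots> \<longleftrightarrow> c \<ge> 0" using ac1 by simp
    finally show ?thesis using False by simp
  qed
  have q3: "b - s \<ge> 0 \<longleftrightarrow> (c \<le> 0 \<and> b \<ge> 0)"
  proof (cases "b \<ge> 0")
    case False thus ?thesis using s0 by simp
  next
    case True
    have "b - s \<ge> 0 \<longleftrightarrow> s \<le> b" by linarith
    also have "\<dots> \<longleftrightarrow> s^2 \<le> b^2" using True s0 by (intro sq) auto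
    also have "\<dots> \<longleftrightarrow> c \<le> 0" using ac2 by simp
    finally show ?thesis using True by simp
  qed
  have P': "m2 \<le> (1 + m3 / m5) * (m1 + m5 - m4) \<longleftrightarrow> b \<ge> 0" using P unfolding k_def .
  show ?thesis unfolding e2 e3 q2 q3 P' using assms(8) by auto
qed

end
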